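(* Assume the setting and conditions $\mathscr R_1$–$\mathscr R_4$ of the context. Then there exists a constant $\kappa>0$ not depending on $n$ such that for all $n$ and all $u\in\mathbb U_n$, $$\sup_{\vartheta_0\in\Theta}\mathbf E_{\vartheta_0}Z_n^{1/2}(u)\le e^{-\kappa\|u\|^2}.$$
   Context: Setting. $\Theta\subset\mathbb R^2$ is a bounded open convex set; $T>0$, $\nu>0$, $\lambda_0>0$ are known; $k\ge3$ detectors are at known points $\vartheta_j=(x_j,y_j)$. $\tau_j(\vartheta)=\nu^{-1}\|\vartheta_j-\vartheta\|$, $\alpha_j=\inf_{\Theta}\tau_j$, $\beta_j=\sup_\Theta\tau_j$, with $0<\alpha_j$, $\beta_j<T$; $\lambda_j$ is defined on $[-\beta_j,T-\alpha_j]$. Under $\mathbf P_\vartheta$ the observation $X^n=(X_1,\dots,X_k)$ consists of independent inhomogeneous Poisson processes on $[0,T]$ with intensities $n\lambda_j(t-\tau_j(\vartheta))+n\lambda_0$. $L(\vartheta,X^n)$ is the likelihood ratio $$\ln L(\vartheta,X^n)=\sum_{j=1}^k\int_{\tau_j(\vartheta)}^T\ln\Big(1+\frac{\lambda_j(t-\tau_j(\vartheta))}{\lambda_0}\Big)dX_j(t)-n\sum_{j=1}^k\int_{\tau_j(\vartheta)}^T\lambda_j(t-\tau_j(\vartheta))\,dt ,$$ and $Z_n(u)=L(\vartheta_0+u/\sqrt n,X^n)/L(\vartheta_0,X^n)$ for $u\in\mathbb U_n=\{u:\vartheta_0+u/\sqrt n\in\Theta\}$. Fisher information: $J_j(\vartheta)=\dfrac{1}{\nu^2\|\vartheta_j-\vartheta\|^2}\displaystyle\int_{\tau_j(\vartheta)}^T\frac{\lambda_j'(t-\tau_j(\vartheta))^2}{\lambda_j(t-\tau_j(\vartheta))+\lambda_0}dt$,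 $\mathbb I(\vartheta)=\sum_{j=1}^kJ_j(\vartheta)(\vartheta_j-\vartheta)(\vartheta_j-\vartheta)^\top$. Conditions: ($\mathscr R_1$) $\lambda_j(t)=0$ on $[-\beta_j,0]$ and $\lambda_j(t)>0$ on $(0,T-\alpha_j]$; ($\mathscr R_2$) each $\lambda_j$ has two continuous derivatives; ($\mathscr R_3$) $\inf_{\vartheta\in\Theta}\inf_{|e|=1}e^\top\mathbb I(\vartheta)e>0$; ($\mathscr R_4$) at least three detector points are not collinear. *)

theory Defs
  imports "HOL-Probability.Probability"
begin

definition tau :: "real \<Rightarrow> real^2 \<Rightarrow> real^2 \<Rightarrow> real" where
  "tau \<nu> dj \<theta> = dist dj \<theta> / \<nu>"

definition alpha :: "real \<Rightarrow> real^2 \<Rightarrow> (real^2) set \<Rightarrow> real" where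
  "alpha \<nu> dj \<Theta> = (INF \<theta>\<in>\<Theta>. tau \<nu> dj \<theta>)"

definition beta :: "real \<Rightarrow> real^2 \<Rightarrow> (real^2) set \<Rightarrow> real" where
  "beta \<nu> dj \<Theta> = (SUP \<theta>\<in>\<Theta>. tau \<nu> dj \<theta>)"

text \<open>Expectation of a nonnegative functional F of k independent inhomogeneous
  Poisson processes on [0,T] with intensities mu j (j < k).  A realisation of
  process j is represented by the list of its event times; the law is the
  standard one (Janossy densities): the number of points m_j is Poisson with mean
  Lambda_j = integral of mu j over [0,T], and given m_j the points are i.i.d. with
  density mu_j / Lambda_j on [0,T].\<close>

definition pp_expect ::
  "nat \<Rightarrow> real \<Rightarrow> (nat \<Rightarrow> real \<Rightarrow> real) \<Rightarrow> ((nat \<Rightarrow> real list) \<Rightarrow> ennreal) \<Rightarrow> ennreal" where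
  "pp_expect k T mu F =
     (\<integral>\<^sup>+ m. (\<Prod>j<k. ennreal (exp (- integral {0..T} (mu j)) / fact (m j))) *
        (\<integral>\<^sup>+ t. F (\<lambda>j. if j < k then map (\<lambda>i. t (j, i)) [0..<m j] else []) *
                 (\<Prod>p\<in>{(j, i). j < k \<and> i < m j}. ennreal (mu (fst p) (t p)))
           \<partial>PiM {(j, i). j < k \<and> i < m j} (\<lambda>_. restrict_space lborel {0..T}))
      \<partial>count_space (PiE {..<k} (\<lambda>_. UNIV)))"

text \<open>Log-likelihood ratio ln L(theta, X); the stochastic integral against the
  counting process X_j is the sum over its event times.\<close>

definition loglik ::
  "nat \<Rightarrow> real \<Rightarrow> real \<Rightarrow> real \<Rightarrow> (nat \<Rightarrow> real \<Rightarrow> real) \<Rightarrow> (nat \<Rightarrow> real^2) \<Rightarrow> nat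
    \<Rightarrow> real^2 \<Rightarrow> (nat \<Rightarrow> real list) \<Rightarrow> real" where
  "loglik n T \<nu> l0 lam dp k \<theta> X =
     (\<Sum>j<k. sum_list (map (\<lambda>t. if tau \<nu> (dp j) \<theta> \<le> t \<and> t \<le> T
                                 then ln (1 + lam j (t - tau \<nu> (dp j) \<theta>) / l0) else 0) (X j)))
     - real n * (\<Sum>j<k. integral {tau \<nu> (dp j) \<theta>..T} (\<lambda>t. lam j (t - tau \<nu> (dp j) \<theta>)))"

definition fisherJ ::
  "real \<Rightarrow> real \<Rightarrow> real \<Rightarrow> (nat \<Rightarrow> real \<Rightarrow> real) \<Rightarrow> (nat \<Rightarrow> real \<Rightarrow> real) \<Rightarrow> (nat \<Rightarrow> real^2)
    \<Rightarrow> nat \<Rightarrow> real^2 \<Rightarrow> real" where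
  "fisherJ T \<nu> l0 lam lam' dp j \<theta> =
     1 / (\<nu>\<^sup>2 * (dist (dp j) \<theta>)\<^sup>2) *
     integral {tau \<nu> (dp j) \<theta>..T}
       (\<lambda>t. (lam' j (t - tau \<nu> (dp j) \<theta>))\<^sup>2 / (lam j (t - tau \<nu> (dp j) \<theta>) + l0))"

definition fisherI ::
  "real \<Rightarrow> real \<Rightarrow> real \<Rightarrow> (nat \<Rightarrow> real \<Rightarrow> real) \<Rightarrow> (nat \<Rightarrow> real \<Rightarrow> real) \<Rightarrow> (nat \<Rightarrow> real^2)
    \<Rightarrow> nat \<Rightarrow> real^2 \<Rightarrow> real^2^2" where
  "fisherI T \<nu> l0 lam lam' dp k \<theta> =
     (\<Sum>j<k. fisherJ T \<nu> l0 lam lam' dp j \<theta> *\<^sub>R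
              (\<chi> a b. (dp j - \<theta>) $ a * (dp j - \<theta>) $ b))"

end

theory Submission
  imports Defs
begin


lemma sf_R: "sigma_finite_measure (restrict_space lborel {0..(T::real)})"
  by (rule sigma_finite_measure_restrict_space) (auto simp: lborel.sigma_finite_measure_axioms)

lemma nn_R:
  fixes g :: "real \<Rightarrow> real"
  assumes "continuous_on {0..T} g" "\<And>x. x \<in> {0..T} \<Longrightarrow> 0 \<le> g x"
  shows "(\<integral>\<^sup>+ x. ennreal (g x) \<partial>restrict_space lborel {0..T}) = ennreal (integral {0..T} g)"
proof -
  have "(\<integral>\<^sup>+ x. ennreal (g x) \<partial>restrict_space lborel {0..T}) = (\<integral>\<^sup>+ x. ennreal (g x) * indicator {0..T} x \<partial>lborel)"
    by (rule nn_integral_restrict_space) auto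
  also have "\<dots> = ennreal (integral {0..T} g)"
    by (rule nn_integral_has_integral_lebesgue') (use assms integrable_integral[OF integrable_continuous_interval[OF assms(1)]] in auto)
  finally show ?thesis .
qed

lemma meas_R:
  fixes g :: "real \<Rightarrow> real"
  assumes "continuous_on {0..T} g"
  shows "(\<lambda>x. ennreal (g x)) \<in> borel_measurable (restrict_space lborel {0..T})"
proof -
  have "g \<in> borel_measurable (restrict_space borel {0..T})"
    by (rule borel_measurable_continuous_on_restrict[OF assms])
  then have "g \<in> borel_measurable (restrict_space lborel {0..T})"
    by (subst measurable_cong_sets[OF sets_restrict_space_cong[OF sets_lborel] refl])
  then show ?thesis by measurable
qed

lemma exp_series_enn:
  fixes A L :: real
  assumes "A \<ge> 0"
  shows "(\<integral>\<^sup>+ n. ennreal (exp (- L) * A ^ n / fact n) \<partial>count_space UNIV) = ennreal (exp (- L) * exp A)"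
proof -
  have s: "(\<lambda>n. exp (- L) * A ^ n / fact n) sums (exp (- L) * exp A)"
    using sums_mult[OF exp_converges[of A], of "exp (- L)"] by (simp add: divide_inverse mult_ac)
  have "(\<integral>\<^sup>+ n. ennreal (exp (- L) * A ^ n / fact n) \<partial>count_space UNIV) = (\<Sum>n. ennreal (exp (- L) * A ^ n / fact n))"
    by (rule nn_integral_count_space_nat)
  also have "\<dots> = ennreal (\<Sum>n. exp (- L) * A ^ n / fact n)"
    by (rule suminf_ennreal2) (use assms s sums_summable in auto)
  also have "\<dots> = ennreal (exp (- L) * exp A)" using s sums_unique by metis
  finally show ?thesis .
qed

lemma LF:
  fixes k :: nat and T E0 :: real and mu phi :: "nat \<Rightarrow> real \<Rightarrow> real"
    and F :: "(nat \<Rightarrow> real list) \<Rightarrow> ennreal"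
  assumes cmu: "\<And>j. j < k \<Longrightarrow> continuous_on {0..T} (mu j)"
    and cphi: "\<And>j. j < k \<Longrightarrow> continuous_on {0..T} (phi j)"
    and nmu: "\<And>j t. j < k \<Longrightarrow> t \<in> {0..T} \<Longrightarrow> 0 \<le> mu j t"
    and nphi: "\<And>j t. j < k \<Longrightarrow> t \<in> {0..T} \<Longrightarrow> 0 \<le> phi j t"
    and E0: "0 \<le> E0"
    and F: "\<And>m t. (\<And>j i. j < k \<Longrightarrow> i < m j \<Longrightarrow> t (j, i) \<in> {0..T}) \<Longrightarrow>
          F (\<lambda>j. if j < k then map (\<lambda>i. t (j, i)) [0..<m j] else []) =
          ennreal (E0 * (\<Prod>j<k. \<Prod>i<m j. phi j (t (j, i))))"
  shows "pp_expect k T mu F = ennreal (E0 * (\<Prod>j<k. exp (integral {0..T} (\<lambda>t. phi j t * mu j t) - integral {0..T} (mu j))))"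
proof -
  define R where "R = restrict_space lborel {0..T}"
  define A where "A j = integral {0..T} (\<lambda>t. phi j t * mu j t)" for j
  define L where "L j = integral {0..T} (mu j)" for j
  interpret P: product_sigma_finite "\<lambda>_. R" unfolding R_def product_sigma_finite_def by (simp add: sf_R)
  have cpm: "continuous_on {0..T} (\<lambda>t. phi j t * mu j t)" if "j < k" for j
    using cmu cphi that by (intro continuous_on_mult) auto
  have Apos: "0 \<le> A j" if "j < k" for j
    unfolding A_def using that nmu nphi by (intro integral_nonneg integrable_continuous_interval cpm) auto
  have intA: "(\<integral>\<^sup>+ x. ennreal (phi j x * mu j x) \<partial>R) = ennreal (A j)" if "j < k" for j
    unfolding R_def A_def by (rule nn_R) (use cpm nmu nphi that in auto)
  have inner: "(\<integral>\<^sup>+ t. F (\<lambda>j. if j < k then map (\<lambda>i. t (j, i)) [0..<m j] else []) *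
                 (\<Prod>p\<in>{(j, i). j < k \<and> i < m j}. ennreal (mu (fst p) (t p)))
           \<partial>PiM {(j, i). j < k \<and> i < m j} (\<lambda>_. R)) = ennreal E0 * (\<Prod>j<k. ennreal (A j) ^ m j)" for m
  proof -
    define I where "I = {(j, i). j < k \<and> i < m j}"
    have IS: "I = Sigma {..<k} (\<lambda>j. {..<m j})" unfolding I_def by auto
    have fI: "finite I" unfolding IS by auto
    have "(\<integral>\<^sup>+ t. F (\<lambda>j. if j < k then map (\<lambda>i. t (j, i)) [0..<m j] else []) *
                 (\<Prod>p\<in>I. ennreal (mu (fst p) (t p))) \<partial>PiM I (\<lambda>_. R))
        = (\<integral>\<^sup>+ t. ennreal E0 * (\<Prod>p\<in>I. ennreal (phi (fst p) (t p) * mu (fst p) (t p))) \<partial>PiM I (\<lambda>_. R))"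
    proof (rule nn_integral_cong)
      fix t assume "t \<in> space (PiM I (\<lambda>_. R))"
      then have tT: "\<And>p. p \<in> I \<Longrightarrow> t p \<in> {0..T}" by (auto simp: space_PiM R_def PiE_def Pi_def)
      have "F (\<lambda>j. if j < k then map (\<lambda>i. t (j, i)) [0..<m j] else []) =
          ennreal (E0 * (\<Prod>j<k. \<Prod>i<m j. phi j (t (j, i))))"
        by (rule F) (use tT in \<open>auto simp: I_def\<close>)
      also have "(\<Prod>j<k. \<Prod>i<m j. phi j (t (j, i))) = (\<Prod>p\<in>I. phi (fst p) (t p))"
        unfolding IS by (subst prod.Sigma) (auto simp: case_prod_beta)
      finally have Feq: "F (\<lambda>j. if j < k then map (\<lambda>i. t (j, i)) [0..<m j] else []) = ennreal (E0 * (\<Prod>p\<in>I. phi (fst p) (t p)))" .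
      then have eqF: "F (\<lambda>j. if j < k then map (\<lambda>i. t (j, i)) [0..<m j] else []) = ennreal E0 * (\<Prod>p\<in>I. ennreal (phi (fst p) (t p)))"
      proof -
        have "\<And>p. p \<in> I \<Longrightarrow> 0 \<le> phi (fst p) (t p)" using nphi tT by (auto simp: I_def)
        then have "(\<Prod>p\<in>I. ennreal (phi (fst p) (t p))) = ennreal (\<Prod>p\<in>I. phi (fst p) (t p))"
          by (rule prod_ennreal)
        moreover have "0 \<le> (\<Prod>p\<in>I. phi (fst p) (t p))"
          using \<open>\<And>p. p \<in> I \<Longrightarrow> 0 \<le> phi (fst p) (t p)\<close> by (simp add: prod_nonneg)
        ultimately show ?thesis using Feq E0 by (simp add: ennreal_mult)
      qed
      show "F (\<lambda>j. if j < k then map (\<lambda>i. t (j, i)) [0..<m j] else []) * (\<Prod>p\<in>I. ennreal (mu (fst p) (t p)))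
          = ennreal E0 * (\<Prod>p\<in>I. ennreal (phi (fst p) (t p) * mu (fst p) (t p)))"
        unfolding eqF mult.assoc prod.distrib[symmetric]
        by (intro arg_cong2[where f="(*)"] refl prod.cong) (use nphi nmu tT in \<open>auto simp: I_def ennreal_mult\<close>)
    qed
    also have "\<dots> = ennreal E0 * (\<integral>\<^sup>+ t. (\<Prod>p\<in>I. ennreal (phi (fst p) (t p) * mu (fst p) (t p))) \<partial>PiM I (\<lambda>_. R))"
    proof (rule nn_integral_cmult)
      show "(\<lambda>t. \<Prod>p\<in>I. ennreal (phi (fst p) (t p) * mu (fst p) (t p))) \<in> borel_measurable (PiM I (\<lambda>_. R))"
        by (intro borel_measurable_prod_ennreal measurable_comp[OF measurable_component_singleton, unfolded comp_def])
          (auto simp: R_def I_def intro!: meas_R cpm)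
    qed
    also have "(\<integral>\<^sup>+ t. (\<Prod>p\<in>I. ennreal (phi (fst p) (t p) * mu (fst p) (t p))) \<partial>PiM I (\<lambda>_. R))
        = (\<Prod>p\<in>I. (\<integral>\<^sup>+ x. ennreal (phi (fst p) x * mu (fst p) x) \<partial>R))"
    proof (rule P.product_nn_integral_prod[OF fI])
      fix p assume "p \<in> I"
      then have "fst p < k" unfolding I_def by auto
      then show "(\<lambda>x. ennreal (phi (fst p) x * mu (fst p) x)) \<in> borel_measurable R"
        unfolding R_def by (intro meas_R cpm)
    qed
    also have "\<dots> = (\<Prod>p\<in>I. ennreal (A (fst p)))"
      by (rule prod.cong) (auto simp: I_def intA)
    also have "\<dots> = (\<Prod>j<k. ennreal (A j) ^ m j)"
    proof -
      have "(\<Prod>j<k. \<Prod>i<m j. ennreal (A j)) = (\<Prod>p\<in>Sigma {..<k} (\<lambda>j. {..<m j}). ennreal (A (fst p)))"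
        by (subst prod.Sigma) (auto simp: split_def)
      then show ?thesis unfolding IS by simp
    qed
    finally show ?thesis unfolding I_def .
  qed
  have "pp_expect k T mu F = (\<integral>\<^sup>+ m. (\<Prod>j<k. ennreal (exp (- L j) / fact (m j))) * (ennreal E0 * (\<Prod>j<k. ennreal (A j) ^ m j))
      \<partial>count_space (PiE {..<k} (\<lambda>_. UNIV)))"
    unfolding pp_expect_def L_def R_def[symmetric] by (simp only: inner)
  also have "\<dots> = (\<integral>\<^sup>+ m. ennreal E0 * (\<Prod>j<k. ennreal (exp (- L j) * A j ^ m j / fact (m j)))
      \<partial>count_space (PiE {..<k} (\<lambda>_. UNIV)))"
  proof (rule nn_integral_cong)
    fix m :: "nat \<Rightarrow> nat"
    have "(\<Prod>j<k. ennreal (exp (- L j) / fact (m j))) * (\<Prod>j<k. ennreal (A j) ^ m j) =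
        (\<Prod>j<k. ennreal (exp (- L j) * A j ^ m j / fact (m j)))"
      unfolding prod.distrib[symmetric]
      by (rule prod.cong) (use Apos in \<open>auto simp: ennreal_mult'' ennreal_power[symmetric] divide_inverse mult_ac\<close>)
    then show "(\<Prod>j<k. ennreal (exp (- L j) / fact (m j))) * (ennreal E0 * (\<Prod>j<k. ennreal (A j) ^ m j)) =
        ennreal E0 * (\<Prod>j<k. ennreal (exp (- L j) * A j ^ m j / fact (m j)))"
      by (simp add: mult_ac)
  qed
  also have "\<dots> = ennreal E0 * (\<integral>\<^sup>+ m. (\<Prod>j<k. ennreal (exp (- L j) * A j ^ m j / fact (m j)))
      \<partial>PiM {..<k} (\<lambda>_. count_space UNIV))"
    by (subst count_space_PiM_finite) (auto intro!: nn_integral_cmult)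
  also have "(\<integral>\<^sup>+ m. (\<Prod>j<k. ennreal (exp (- L j) * A j ^ m j / fact (m j)))
      \<partial>PiM {..<k} (\<lambda>_. count_space UNIV)) = (\<Prod>j<k. (\<integral>\<^sup>+ n. ennreal (exp (- L j) * A j ^ n / fact n) \<partial>count_space UNIV))"
  proof -
    interpret C: product_sigma_finite "\<lambda>_::nat. count_space (UNIV::nat set)"
      unfolding product_sigma_finite_def by (simp add: sigma_finite_measure_count_space)
    show ?thesis by (rule C.product_nn_integral_prod) auto
  qed
  also have "\<dots> = (\<Prod>j<k. ennreal (exp (- L j) * exp (A j)))"
    by (rule prod.cong) (use Apos exp_series_enn in auto)
  also have "ennreal E0 * \<dots> = ennreal (E0 * (\<Prod>j<k. exp (A j - L j)))"
  proof -
    have "(\<Prod>j<k. ennreal (exp (- L j) * exp (A j))) = ennreal (\<Prod>j<k. exp (A j - L j))"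
      by (subst prod_ennreal) (auto simp: exp_diff exp_minus divide_inverse mult_ac)
    then show ?thesis using E0 by (simp add: ennreal_mult prod_nonneg)
  qed
  finally show ?thesis unfolding A_def L_def .
qed



lemma int_lb:
  fixes g :: "real \<Rightarrow> real"
  assumes "a \<le> b" "0 \<le> a" "b \<le> T" "continuous_on {0..T} g" "\<And>t. t \<in> {0..T} \<Longrightarrow> 0 \<le> g t"
    "\<And>t. t \<in> {a..b} \<Longrightarrow> c \<le> g t"
  shows "(b - a) * c \<le> integral {0..T} g"
proof -
  have ci: "continuous_on {a..b} g" by (rule continuous_on_subset[OF assms(4)]) (use assms in auto)
  have "(b - a) * c = integral {a..b} (\<lambda>_. c)" using assms(1) by simp
  also have "\<dots> \<le> integral {a..b} g"
    by (rule integral_le) (use assms(6) integrable_continuous_interval[OF ci] in auto)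
  also have "\<dots> \<le> integral {0..T} g"
    by (rule integral_subset_le) (use assms integrable_continuous_interval[OF ci] integrable_continuous_interval[OF assms(4)] in auto)
  finally show ?thesis .
qed

lemma shift_bound:
  fixes f f' :: "real \<Rightarrow> real" and \<alpha> \<beta> T :: real
  assumes ab: "0 < \<alpha>" "\<alpha> \<le> \<beta>" "\<beta> < T"
    and f0: "\<And>s. s \<in> {-\<beta>..0} \<Longrightarrow> f s = 0"
    and fpos: "\<And>s. s \<in> {0<..T-\<alpha>} \<Longrightarrow> f s > 0"
    and fc: "continuous_on {-\<beta>..T-\<alpha>} f"
    and fd: "\<And>s. s \<in> {-\<beta><..<T-\<alpha>} \<Longrightarrow> (f has_real_derivative f' s) (at s)"
    and f'c: "continuous_on {-\<beta><..<T-\<alpha>} f'"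
  shows "\<exists>c>0. \<forall>\<tau> \<tau>'. \<tau> \<in> {\<alpha>..\<beta>} \<longrightarrow> \<tau>' \<in> {\<alpha>..\<beta>} \<longrightarrow>
           c * (\<tau> - \<tau>')\<^sup>2 \<le> integral {0..T} (\<lambda>t. (f (t - \<tau>) - f (t - \<tau>'))\<^sup>2)"
proof -
  define D where "D = (T - \<beta>) / 2"
  have D: "0 < D" "D < T - \<alpha>" using ab by (auto simp: D_def)
  obtain \<xi> where \<xi>: "0 < \<xi>" "\<xi> < D" "f D - f 0 = (D - 0) * f' \<xi>"
    using MVT2[of 0 D f f'] D ab fd by auto
  have "f 0 = 0" using f0 ab by auto
  moreover have "f D > 0" using fpos D by auto
  ultimately have f'\<xi>: "f' \<xi> > 0" using \<xi> D by (simp add: zero_less_mult_iff)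
  define \<eta> where "\<eta> = f' \<xi> / 2"
  have \<eta>: "\<eta> > 0" using f'\<xi> by (simp add: \<eta>_def)
  have \<xi>in: "\<xi> \<in> {-\<beta><..<T-\<alpha>}" using \<xi> D ab by auto
  obtain \<rho>0 where \<rho>0: "\<rho>0 > 0" "\<And>s. s \<in> {-\<beta><..<T-\<alpha>} \<Longrightarrow> dist s \<xi> < \<rho>0 \<Longrightarrow> dist (f' s) (f' \<xi>) < \<eta>"
    using f'c \<xi>in \<eta> unfolding continuous_on_iff by metis
  define \<rho> where "\<rho> = min (\<rho>0 / 2) (min (\<xi> / 2) ((D - \<xi>) / 2))"
  have \<rho>: "\<rho> > 0" "\<rho> < \<rho>0" "0 < \<xi> - \<rho>" "\<xi> + \<rho> < D" using \<rho>0 \<xi> unfolding \<rho>_def min_def by (auto simp: field_simps)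
  have f'lb: "f' s \<ge> \<eta>" if "\<xi> - \<rho> \<le> s" "s \<le> \<xi> + \<rho>" for s
  proof -
    have "s \<in> {-\<beta><..<T-\<alpha>}" using that \<rho> D ab by auto
    moreover have "dist s \<xi> < \<rho>0" using that \<rho> by (auto simp: dist_real_def)
    ultimately have "dist (f' s) (f' \<xi>) < \<eta>" by (rule \<rho>0(2))
    then show ?thesis unfolding dist_real_def \<eta>_def by linarith
  qed
  have incr: "\<eta> * (x - y) \<le> f x - f y" if xy: "\<xi> - \<rho> \<le> y" "y \<le> x" "x \<le> \<xi> + \<rho>" for x y
  proof (cases "y = x")
    case False
    then have "y < x" using that by auto
    then obtain z where z: "y < z" "z < x" "f x - f y = (x - y) * f' z"
      using MVT2[of y x f f'] fd xy \<rho> D ab by force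
    have "f' z \<ge> \<eta>" using z xy by (intro f'lb) auto
    then show ?thesis using z \<open>y < x\<close> by (simp add: mult.commute mult_left_mono)
  qed simp
  obtain s0 where s0: "s0 \<in> {\<rho>/4..\<rho>/2}" "\<And>s. s \<in> {\<rho>/4..\<rho>/2} \<Longrightarrow> f s0 \<le> f s"
    using continuous_attains_inf[of "{\<rho>/4..\<rho>/2}" f] continuous_on_subset[OF fc, of "{\<rho>/4..\<rho>/2}"] \<rho> D ab
    by force
  define m where "m = f s0"
  have m: "m > 0" using s0 fpos \<rho> D ab unfolding m_def by auto
  define c where "c = min (\<rho> * \<eta>\<^sup>2) (\<rho> * m\<^sup>2 / (4 * \<beta>\<^sup>2))"
  have c: "c > 0" using \<rho> \<eta> m ab by (auto simp: c_def)
  have cont: "continuous_on {0..T} (\<lambda>t. f (t - \<tau>))" if "\<tau> \<in> {\<alpha>..\<beta>}" for \<tau>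
    by (rule continuous_on_compose2[OF fc]) (use that in \<open>auto intro!: continuous_intros\<close>)
  have main: "c * (\<tau> - \<tau>')\<^sup>2 \<le> integral {0..T} (\<lambda>t. (f (t - \<tau>) - f (t - \<tau>'))\<^sup>2)"
    if \<tau>: "\<tau> \<in> {\<alpha>..\<beta>}" "\<tau>' \<in> {\<alpha>..\<beta>}" "\<tau> \<le> \<tau>'" for \<tau> \<tau>'
  proof -
    define g where "g t = (f (t - \<tau>) - f (t - \<tau>'))\<^sup>2" for t
    have gc: "continuous_on {0..T} g" unfolding g_def using cont[OF \<tau>(1)] cont[OF \<tau>(2)]
      by (intro continuous_intros)
    have gnn: "\<And>t. t \<in> {0..T} \<Longrightarrow> 0 \<le> g t" by (simp add: g_def)
    define \<delta> where "\<delta> = \<tau>' - \<tau>"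
    have gi: "integral {0..T} g = integral {0..T} (\<lambda>t. (f (t - \<tau>) - f (t - \<tau>'))\<^sup>2)" unfolding g_def ..
    have d2: "(\<tau> - \<tau>')\<^sup>2 = \<delta>\<^sup>2" unfolding \<delta>_def by (simp add: power2_commute)
    have \<delta>: "0 \<le> \<delta>" "\<delta> \<le> \<beta>" using \<tau> ab by (auto simp: \<delta>_def)
    show ?thesis
    proof (cases "\<delta> \<le> \<rho> / 2")
      case True
      have "\<rho> * (\<eta>\<^sup>2 * \<delta>\<^sup>2) \<le> integral {0..T} g"
      proof -
        have "((\<tau> + \<xi> + \<rho>/2) - (\<tau> + \<xi> - \<rho>/2)) * (\<eta>\<^sup>2 * \<delta>\<^sup>2) \<le> integral {0..T} g"
        proof (rule int_lb[OF _ _ _ gc gnn])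
          fix t assume t: "t \<in> {\<tau> + \<xi> - \<rho>/2..\<tau> + \<xi> + \<rho>/2}"
          have "\<eta> * (t - \<tau> - (t - \<tau>')) \<le> f (t - \<tau>) - f (t - \<tau>')"
            by (rule incr) (use t True \<delta> in \<open>auto simp: \<delta>_def\<close>)
          then have "\<eta> * \<delta> \<le> f (t - \<tau>) - f (t - \<tau>')" by (simp add: \<delta>_def)
          moreover have "0 \<le> \<eta> * \<delta>" using \<eta> \<delta> by simp
          ultimately have "(\<eta> * \<delta>)\<^sup>2 \<le> (f (t - \<tau>) - f (t - \<tau>'))\<^sup>2" by (rule power_mono)
          then show "\<eta>\<^sup>2 * \<delta>\<^sup>2 \<le> g t" by (simp add: g_def power_mult_distrib)
        qed (use \<tau> \<rho> D ab in \<open>auto simp: D_def\<close>)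
        then show ?thesis by simp
      qed
      moreover have "c * \<delta>\<^sup>2 \<le> \<rho> * (\<eta>\<^sup>2 * \<delta>\<^sup>2)"
        using mult_right_mono[of c "\<rho> * \<eta>\<^sup>2" "\<delta>\<^sup>2"] by (simp add: c_def mult.assoc)
      ultimately show ?thesis unfolding d2 gi[symmetric] by linarith
    next
      case False
      have "(\<tau> + \<rho>/2 - (\<tau> + \<rho>/4)) * m\<^sup>2 \<le> integral {0..T} g"
      proof (rule int_lb[OF _ _ _ gc gnn])
        fix t assume t: "t \<in> {\<tau> + \<rho>/4..\<tau> + \<rho>/2}"
        have "f (t - \<tau>') = 0" by (rule f0) (use t False \<tau> ab in \<open>auto simp: \<delta>_def\<close>)
        moreover have "m \<le> f (t - \<tau>)" unfolding m_def by (rule s0(2)) (use t in auto)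
        ultimately show "m\<^sup>2 \<le> g t" unfolding g_def using m by (simp add: power_mono)
      qed (use \<tau> \<rho> D ab in \<open>auto simp: D_def\<close>)
      then have "\<rho> * m\<^sup>2 / 4 \<le> integral {0..T} g" by simp
      moreover have "c * \<delta>\<^sup>2 \<le> \<rho> * m\<^sup>2 / 4"
      proof -
        have "\<delta>\<^sup>2 \<le> \<beta>\<^sup>2" using \<delta> by (simp add: power_mono)
        have "c * \<delta>\<^sup>2 \<le> (\<rho> * m\<^sup>2 / (4 * \<beta>\<^sup>2)) * \<beta>\<^sup>2"
          by (rule mult_mono) (use \<open>\<delta>\<^sup>2 \<le> \<beta>\<^sup>2\<close> c in \<open>auto simp: c_def\<close>)
        also have "\<dots> = \<rho> * m\<^sup>2 / 4" using ab by simp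
        finally show ?thesis .
      qed
      ultimately show ?thesis unfolding d2 gi[symmetric] by linarith
    qed
  qed
  show ?thesis
  proof (intro exI[of _ c] conjI allI impI c)
    fix \<tau> \<tau>' assume \<tau>: "\<tau> \<in> {\<alpha>..\<beta>}" "\<tau>' \<in> {\<alpha>..\<beta>}"
    show "c * (\<tau> - \<tau>')\<^sup>2 \<le> integral {0..T} (\<lambda>t. (f (t - \<tau>) - f (t - \<tau>'))\<^sup>2)"
    proof (cases "\<tau> \<le> \<tau>'")
      case True then show ?thesis using main \<tau> by blast
    next
      case False
      then have "c * (\<tau>' - \<tau>)\<^sup>2 \<le> integral {0..T} (\<lambda>t. (f (t - \<tau>') - f (t - \<tau>))\<^sup>2)"
        using main \<tau> by simp
      then show ?thesis by (simp add: power2_commute)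
    qed
  qed
qed



lemma inner2: "(x::real^2) \<bullet> y = x$1 * y$1 + x$2 * y$2"
  by (simp add: inner_vec_def sum_2)

lemma norm2sq: "(norm (x::real^2))\<^sup>2 = (x$1)\<^sup>2 + (x$2)\<^sup>2"
  unfolding power2_norm_eq_inner inner2 by (simp add: power2_eq_square)

lemma cs2: "((a::real) * X - b * Y)\<^sup>2 \<le> (a\<^sup>2 + b\<^sup>2) * (X\<^sup>2 + Y\<^sup>2)"
proof -
  have "(a\<^sup>2 + b\<^sup>2) * (X\<^sup>2 + Y\<^sup>2) = (a * X - b * Y)\<^sup>2 + (a * Y + b * X)\<^sup>2"
    by (simp add: power2_eq_square algebra_simps)
  then show ?thesis by simp
qed

lemma det_bound:
  fixes p q w :: "real^2"
  shows "(p$1 * q$2 - p$2 * q$1)\<^sup>2 * (norm w)\<^sup>2 \<le> ((norm p)\<^sup>2 + (norm q)\<^sup>2) * ((w \<bullet> p)\<^sup>2 + (w \<bullet> q)\<^sup>2)"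
proof -
  define X where "X = w \<bullet> p"
  define Y where "Y = w \<bullet> q"
  define d where "d = p$1 * q$2 - p$2 * q$1"
  have e1: "d * w$1 = q$2 * X - p$2 * Y" unfolding X_def Y_def d_def inner2 by (simp add: algebra_simps)
  have e2: "d * w$2 = p$1 * Y - q$1 * X" unfolding X_def Y_def d_def inner2 by (simp add: algebra_simps)
  have "d\<^sup>2 * (norm w)\<^sup>2 = (d * w$1)\<^sup>2 + (d * w$2)\<^sup>2" by (simp add: norm2sq power_mult_distrib algebra_simps)
  also have "\<dots> \<le> ((q$2)\<^sup>2 + (p$2)\<^sup>2) * (X\<^sup>2 + Y\<^sup>2) + ((p$1)\<^sup>2 + (q$1)\<^sup>2) * (Y\<^sup>2 + X\<^sup>2)"
    unfolding e1 e2 by (intro add_mono cs2)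
  also have "\<dots> = ((norm p)\<^sup>2 + (norm q)\<^sup>2) * (X\<^sup>2 + Y\<^sup>2)" by (simp add: norm2sq algebra_simps)
  finally show ?thesis unfolding X_def Y_def d_def .
qed

lemma noncol_det:
  fixes a b c :: "real^2"
  assumes "\<not> collinear {a, b, c}"
  shows "(b - a)$1 * (c - a)$2 - (b - a)$2 * (c - a)$1 \<noteq> 0"
proof
  assume det: "(b - a)$1 * (c - a)$2 - (b - a)$2 * (c - a)$1 = 0"
  define p where "p = b - a"
  define q where "q = c - a"
  have det': "p$1 * q$2 = p$2 * q$1" using det unfolding p_def q_def by simp
  have "collinear {0, p, q}"
    unfolding collinear_lemma
  proof (cases "p = 0")
    case False
    then have "p$1 \<noteq> 0 \<or> p$2 \<noteq> 0" by (auto simp: vec_eq_iff forall_2)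
    then have "\<exists>c. q = c *\<^sub>R p"
    proof
      assume h: "p$1 \<noteq> 0"
      show ?thesis
        by (rule exI[of _ "q$1 / p$1"]) (use h det' in \<open>auto simp: vec_eq_iff forall_2 field_simps\<close>)
    next
      assume h: "p$2 \<noteq> 0"
      show ?thesis
        by (rule exI[of _ "q$2 / p$2"]) (use h det' in \<open>auto simp: vec_eq_iff forall_2 field_simps\<close>)
    qed
    then show "p = 0 \<or> q = 0 \<or> (\<exists>c. q = c *\<^sub>R p)" by blast
  qed simp
  then have "collinear {b, a, c}" unfolding p_def q_def by (subst collinear_3) auto
  then show False using assms by (simp add: insert_commute)
qed

lemma tau_diff:
  fixes d th th0 :: "real^2"
  assumes "\<nu> > 0" "dist d th \<le> R" "dist d th0 \<le> R"
  shows "((th0 - th) \<bullet> ((d + d) - th - th0))\<^sup>2 \<le> (tau \<nu> d th - tau \<nu> d th0)\<^sup>2 * (4 * R\<^sup>2 * \<nu>\<^sup>2)"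
proof -
  define x where "x = d - th"
  define y where "y = d - th0"
  have nx: "dist d th = norm x" "dist d th0 = norm y" unfolding x_def y_def by (simp_all add: dist_norm)
  have z: "(th0 - th) \<bullet> ((d + d) - th - th0) = (norm x - norm y) * (norm x + norm y)"
  proof -
    have "(norm x - norm y) * (norm x + norm y) = x \<bullet> x - y \<bullet> y"
      by (simp add: power2_norm_eq_inner[symmetric] algebra_simps power2_eq_square)
    also have "\<dots> = (th0 - th) \<bullet> ((d + d) - th - th0)"
      unfolding x_def y_def inner_diff_left inner_diff_right inner_add_right inner_add_left
      by (simp add: inner_commute algebra_simps)
    finally show ?thesis by simp
  qed
  have s: "(norm x + norm y)\<^sup>2 \<le> (2 * R)\<^sup>2"
    by (rule power_mono) (use assms nx in auto)
  have "((th0 - th) \<bullet> ((d + d) - th - th0))\<^sup>2 = (norm x - norm y)\<^sup>2 * (norm x + norm y)\<^sup>2"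
    unfolding z by (simp add: power_mult_distrib)
  also have "\<dots> \<le> (norm x - norm y)\<^sup>2 * (2 * R)\<^sup>2" by (rule mult_left_mono[OF s]) simp
  also have "\<dots> = (tau \<nu> d th - tau \<nu> d th0)\<^sup>2 * (4 * R\<^sup>2 * \<nu>\<^sup>2)"
    using assms(1) unfolding tau_def nx by (simp add: field_simps power2_eq_square)
  finally show ?thesis .
qed

lemma geo3:
  fixes da db dc :: "real^2" and R \<nu> :: real
  assumes nc: "\<not> collinear {da, db, dc}" and pos: "R > 0" "\<nu> > 0"
  shows "\<exists>G>0. \<forall>th th0. (\<forall>d\<in>{da, db, dc}. dist d th \<le> R \<and> dist d th0 \<le> R) \<longrightarrow>
     G * (norm (th - th0))\<^sup>2 \<le> (tau \<nu> da th - tau \<nu> da th0)\<^sup>2 + (tau \<nu> db th - tau \<nu> db th0)\<^sup>2 + (tau \<nu> dc th - tau \<nu> dc th0)\<^sup>2"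
proof -
  define p where "p = db - da"
  define q where "q = dc - da"
  define det where "det = p$1 * q$2 - p$2 * q$1"
  have det: "det \<noteq> 0" unfolding det_def p_def q_def by (rule noncol_det[OF nc])
  have pq: "(norm p)\<^sup>2 + (norm q)\<^sup>2 > 0"
  proof -
    have "p \<noteq> 0" using det unfolding det_def by auto
    then show ?thesis by (simp add: add_pos_nonneg)
  qed
  define K where "K = 4 * R\<^sup>2 * \<nu>\<^sup>2"
  have K: "K > 0" using pos by (simp add: K_def)
  define G where "G = det\<^sup>2 / (((norm p)\<^sup>2 + (norm q)\<^sup>2) * K)"
  have G: "G > 0" using det pq K by (simp add: G_def)
  show ?thesis
  proof (intro exI[of _ G] conjI allI impI G)
    fix th th0 :: "real^2"
    assume h: "\<forall>d\<in>{da, db, dc}. dist d th \<le> R \<and> dist d th0 \<le> R"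
    define w where "w = th0 - th"
    define z where "z d = w \<bullet> ((d + d) - th - th0)" for d
    have za: "(z da)\<^sup>2 \<le> (tau \<nu> da th - tau \<nu> da th0)\<^sup>2 * K"
      unfolding z_def w_def K_def by (rule tau_diff) (use h pos in auto)
    have zb: "(z db)\<^sup>2 \<le> (tau \<nu> db th - tau \<nu> db th0)\<^sup>2 * K"
      unfolding z_def w_def K_def by (rule tau_diff) (use h pos in auto)
    have zc: "(z dc)\<^sup>2 \<le> (tau \<nu> dc th - tau \<nu> dc th0)\<^sup>2 * K"
      unfolding z_def w_def K_def by (rule tau_diff) (use h pos in auto)
    have d1: "z db - z da = 2 * (w \<bullet> p)" unfolding z_def p_def inner_diff_right inner_add_right
      by (simp add: algebra_simps)
    have d2: "z dc - z da = 2 * (w \<bullet> q)" unfolding z_def q_def inner_diff_right inner_add_right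
      by (simp add: algebra_simps)
    have sq: "(w \<bullet> p)\<^sup>2 + (w \<bullet> q)\<^sup>2 \<le> (z da)\<^sup>2 + (z db)\<^sup>2 + (z dc)\<^sup>2"
    proof -
      have "4 * ((z da)\<^sup>2 + (z db)\<^sup>2 + (z dc)\<^sup>2) - (z db - z da)\<^sup>2 - (z dc - z da)\<^sup>2
          = (z da + z db)\<^sup>2 + (z da + z dc)\<^sup>2 + 2 * (z db)\<^sup>2 + 2 * (z dc)\<^sup>2"
        by (simp add: power2_eq_square algebra_simps)
      moreover have "0 \<le> (z da + z db)\<^sup>2 + (z da + z dc)\<^sup>2 + 2 * (z db)\<^sup>2 + 2 * (z dc)\<^sup>2" by simp
      moreover have "(z db - z da)\<^sup>2 = 4 * (w \<bullet> p)\<^sup>2" unfolding d1 by (simp add: power_mult_distrib)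
      moreover have "(z dc - z da)\<^sup>2 = 4 * (w \<bullet> q)\<^sup>2" unfolding d2 by (simp add: power_mult_distrib)
      ultimately show ?thesis by (smt (verit))
    qed
    have "det\<^sup>2 * (norm w)\<^sup>2 \<le> ((norm p)\<^sup>2 + (norm q)\<^sup>2) * ((w \<bullet> p)\<^sup>2 + (w \<bullet> q)\<^sup>2)"
      unfolding det_def by (rule det_bound)
    also have "\<dots> \<le> ((norm p)\<^sup>2 + (norm q)\<^sup>2) * (((tau \<nu> da th - tau \<nu> da th0)\<^sup>2 + (tau \<nu> db th - tau \<nu> db th0)\<^sup>2 + (tau \<nu> dc th - tau \<nu> dc th0)\<^sup>2) * K)"
      by (rule mult_left_mono) (use sq za zb zc in \<open>auto simp: algebra_simps\<close>)
    finally have "det\<^sup>2 * (norm w)\<^sup>2 \<le> (((norm p)\<^sup>2 + (norm q)\<^sup>2) * K) * ((tau \<nu> da th - tau \<nu> da th0)\<^sup>2 + (tau \<nu> db th - tau \<nu> db th0)\<^sup>2 + (tau \<nu> dc th - tau \<nu> dc th0)\<^sup>2)"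
      by (simp add: mult_ac)
    moreover have "norm w = norm (th - th0)" unfolding w_def by (simp add: norm_minus_commute)
    ultimately have ineq: "det\<^sup>2 * (norm (th - th0))\<^sup>2 \<le> (((norm p)\<^sup>2 + (norm q)\<^sup>2) * K) * ((tau \<nu> da th - tau \<nu> da th0)\<^sup>2 + (tau \<nu> db th - tau \<nu> db th0)\<^sup>2 + (tau \<nu> dc th - tau \<nu> dc th0)\<^sup>2)"
      by simp
    have M: "((norm p)\<^sup>2 + (norm q)\<^sup>2) * K > 0" using pq K by simp
    have "G * (norm (th - th0))\<^sup>2 = det\<^sup>2 * (norm (th - th0))\<^sup>2 / (((norm p)\<^sup>2 + (norm q)\<^sup>2) * K)"
      by (simp add: G_def)
    also have "\<dots> \<le> (tau \<nu> da th - tau \<nu> da th0)\<^sup>2 + (tau \<nu> db th - tau \<nu> db th0)\<^sup>2 + (tau \<nu> dc th - tau \<nu> dc th0)\<^sup>2"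
      using ineq M by (simp add: pos_divide_le_eq mult.commute)
    finally show "G * (norm (th - th0))\<^sup>2 \<le> (tau \<nu> da th - tau \<nu> da th0)\<^sup>2 + (tau \<nu> db th - tau \<nu> db th0)\<^sup>2 + (tau \<nu> dc th - tau \<nu> dc th0)\<^sup>2"
      .
  qed
qed



lemma sqrt_shift:
  fixes lam lam' lam'' :: "real \<Rightarrow> real" and \<alpha> \<beta> T l0 :: real
  assumes ab: "0 < \<alpha>" "\<alpha> \<le> \<beta>" "\<beta> < T" and l0: "l0 > 0"
    and R1a: "\<forall>t\<in>{-\<beta>..0}. lam t = 0"
    and R1b: "\<forall>t\<in>{0<..T-\<alpha>}. lam t > 0"
    and R2: "\<forall>t\<in>{-\<beta>..T-\<alpha>}. (lam has_real_derivative lam' t) (at t within {-\<beta>..T-\<alpha>}) \<and>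
               (lam' has_real_derivative lam'' t) (at t within {-\<beta>..T-\<alpha>})"
  shows "\<exists>c>0. \<forall>\<tau> \<tau>'. \<tau> \<in> {\<alpha>..\<beta>} \<longrightarrow> \<tau>' \<in> {\<alpha>..\<beta>} \<longrightarrow>
           c * (\<tau> - \<tau>')\<^sup>2 \<le> integral {0..T} (\<lambda>t. (sqrt (lam (t - \<tau>) + l0) - sqrt (lam (t - \<tau>') + l0))\<^sup>2)"
proof -
  define S where "S = {-\<beta>..T-\<alpha>}"
  have lc: "continuous_on S lam" unfolding S_def by (rule DERIV_continuous_on) (use R2 in auto)
  have l'c: "continuous_on S lam'" unfolding S_def by (rule DERIV_continuous_on) (use R2 in auto)
  have lnn: "lam s \<ge> 0" if "s \<in> S" for s
  proof (cases "s \<le> 0")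
    case True then show ?thesis using R1a that by (auto simp: S_def)
  next
    case False
    then have "lam s > 0" using R1b that by (auto simp: S_def)
    then show ?thesis by simp
  qed
  define f where "f s = sqrt (lam s + l0) - sqrt l0" for s
  define f' where "f' s = lam' s / (2 * sqrt (lam s + l0))" for s
  have "\<exists>c>0. \<forall>\<tau> \<tau>'. \<tau> \<in> {\<alpha>..\<beta>} \<longrightarrow> \<tau>' \<in> {\<alpha>..\<beta>} \<longrightarrow>
           c * (\<tau> - \<tau>')\<^sup>2 \<le> integral {0..T} (\<lambda>t. (f (t - \<tau>) - f (t - \<tau>'))\<^sup>2)"
  proof (rule shift_bound[OF ab, of f f'])
    fix s assume "s \<in> {-\<beta>..0}" then show "f s = 0" using R1a by (simp add: f_def)
  next
    fix s assume "s \<in> {0<..T-\<alpha>}" then show "f s > 0" using R1b l0 by (simp add: f_def)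
  next
    show "continuous_on {-\<beta>..T-\<alpha>} f" unfolding f_def using lc unfolding S_def
      by (intro continuous_intros)
  next
    fix s assume s: "s \<in> {-\<beta><..<T-\<alpha>}"
    then have sS: "s \<in> S" by (auto simp: S_def)
    have "interior S = {-\<beta><..<T-\<alpha>}" by (simp add: S_def)
    then have at: "at s within S = at s" using s by (intro at_within_interior) auto
    have d: "(lam has_real_derivative lam' s) (at s)" using R2 sS at unfolding S_def by metis
    have pos: "lam s + l0 > 0" using lnn[OF sS] l0 by simp
    have h: "((\<lambda>x. sqrt (lam x + l0) - sqrt l0) has_real_derivative (inverse (sqrt (lam s + l0)) / 2 * (lam' s + 0) - 0)) (at s)"
      by (rule DERIV_diff[OF DERIV_chain2[OF DERIV_real_sqrt[OF pos] DERIV_add[OF d DERIV_const]] DERIV_const])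
    have eq: "inverse (sqrt (lam s + l0)) / 2 * (lam' s + 0) - 0 = lam' s / (2 * sqrt (lam s + l0))"
      by (simp only: add_0_right diff_0_right divide_inverse inverse_mult_distrib mult_ac)
    have fe: "f = (\<lambda>x. sqrt (lam x + l0) - sqrt l0)" unfolding f_def ..
    show "(f has_real_derivative f' s) (at s)"
      unfolding fe f'_def using h unfolding eq .
  next
    have c1: "continuous_on {-\<beta><..<T-\<alpha>} lam'" by (rule continuous_on_subset[OF l'c]) (auto simp: S_def)
    have c2: "continuous_on {-\<beta><..<T-\<alpha>} lam" by (rule continuous_on_subset[OF lc]) (auto simp: S_def)
    have nz: "\<forall>s\<in>{-\<beta><..<T-\<alpha>}. 2 * sqrt (lam s + l0) \<noteq> 0"
    proof
      fix s assume "s \<in> {-\<beta><..<T-\<alpha>}"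
      then have "s \<in> S" by (auto simp: S_def)
      then have "lam s + l0 > 0" using lnn l0 by (simp add: add_nonneg_pos)
      then show "2 * sqrt (lam s + l0) \<noteq> 0" by simp
    qed
    have "continuous_on {-\<beta><..<T-\<alpha>} (\<lambda>s. lam' s / (2 * sqrt (lam s + l0)))"
      by (rule continuous_on_divide[OF c1 _ nz]) (intro continuous_intros c2)
    then show "continuous_on {-\<beta><..<T-\<alpha>} f'" unfolding f'_def .
  qed
  then show ?thesis unfolding f_def by simp
qed



lemma int_shift0:
  fixes g :: "real \<Rightarrow> real"
  assumes "0 \<le> \<tau>" "\<tau> \<le> T" "continuous_on {0..T} g" "\<And>t. t \<in> {0..\<tau>} \<Longrightarrow> g t = 0"
  shows "integral {\<tau>..T} g = integral {0..T} g"
proof -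
  have "integral {0..\<tau>} g + integral {\<tau>..T} g = integral {0..T} g"
    by (rule Henstock_Kurzweil_Integration.integral_combine) (use assms integrable_continuous_interval[OF assms(3)] in auto)
  moreover have "integral {0..\<tau>} g = 0"
  proof -
    have "integral {0..\<tau>} g = integral {0..\<tau>} (\<lambda>_. 0::real)" by (rule integral_cong) (use assms(4) in auto)
    then show ?thesis by simp
  qed
  ultimately show ?thesis by simp
qed

lemma pointwise:
  fixes A B l0 n :: real
  assumes "A \<ge> 0" "B \<ge> 0" "l0 > 0"
  shows "sqrt ((A + l0) / (B + l0)) * (n * B + n * l0) - (n * B + n * l0) - n * (A - B) / 2
         = - (n / 2) * (sqrt (A + l0) - sqrt (B + l0))\<^sup>2"
proof -
  define a where "a = A + l0"
  define b where "b = B + l0"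
  have a: "a > 0" and b: "b > 0" using assms by (auto simp: a_def b_def)
  have e1: "sqrt (a / b) * (n * b) = n * (sqrt a * sqrt b)"
    using b by (simp add: real_sqrt_divide field_simps)
  have e2: "(sqrt a - sqrt b)\<^sup>2 = a + b - 2 * (sqrt a * sqrt b)"
    using a b by (simp add: power2_eq_square algebra_simps)
  have e3: "n * B + n * l0 = n * b" "A - B = a - b" by (simp_all add: a_def b_def algebra_simps)
  have "sqrt (a / b) * (n * b) - n * b - n * (a - b) / 2 = - (n / 2) * (sqrt a - sqrt b)\<^sup>2"
    unfolding e1 e2 by (simp add: field_simps)
  then show ?thesis unfolding e3 a_def b_def .
qed

lemma per_j:
  fixes lam :: "real \<Rightarrow> real" and l0 n T \<tau> \<sigma> :: real
  assumes ca: "continuous_on {0..T} (\<lambda>t. lam (t - \<tau>))" and cb: "continuous_on {0..T} (\<lambda>t. lam (t - \<sigma>))"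
    and na: "\<And>t. t \<in> {0..T} \<Longrightarrow> lam (t - \<tau>) \<ge> 0" and nb: "\<And>t. t \<in> {0..T} \<Longrightarrow> lam (t - \<sigma>) \<ge> 0"
    and l0: "l0 > 0" and tau: "0 \<le> \<tau>" "\<tau> \<le> T" and sig: "0 \<le> \<sigma>" "\<sigma> \<le> T"
    and za: "\<And>t. t \<in> {0..\<tau>} \<Longrightarrow> lam (t - \<tau>) = 0" and zb: "\<And>t. t \<in> {0..\<sigma>} \<Longrightarrow> lam (t - \<sigma>) = 0"
  shows "integral {0..T} (\<lambda>t. sqrt ((lam (t - \<tau>) + l0) / (lam (t - \<sigma>) + l0)) * (n * lam (t - \<sigma>) + n * l0))
       - integral {0..T} (\<lambda>t. n * lam (t - \<sigma>) + n * l0)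
       - n * (integral {\<tau>..T} (\<lambda>t. lam (t - \<tau>)) - integral {\<sigma>..T} (\<lambda>t. lam (t - \<sigma>))) / 2
     = - (n / 2) * integral {0..T} (\<lambda>t. (sqrt (lam (t - \<tau>) + l0) - sqrt (lam (t - \<sigma>) + l0))\<^sup>2)"
proof -
  define a where "a t = lam (t - \<tau>)" for t
  define b where "b t = lam (t - \<sigma>)" for t
  have ca': "continuous_on {0..T} a" and cb': "continuous_on {0..T} b" using ca cb by (simp_all add: a_def b_def)
  have nz: "\<forall>t\<in>{0..T}. b t + l0 \<noteq> 0"
  proof
    fix t assume "t \<in> {0..T}"
    then have "b t \<ge> 0" using nb by (simp add: b_def)
    then show "b t + l0 \<noteq> 0" using l0 by linarith
  qed
  have i1: "integral {\<tau>..T} a = integral {0..T} a" by (rule int_shift0) (use tau ca' za in \<open>auto simp: a_def\<close>)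
  have i2: "integral {\<sigma>..T} b = integral {0..T} b" by (rule int_shift0) (use sig cb' zb in \<open>auto simp: b_def\<close>)
  have I: "f integrable_on {0..T}" if "continuous_on {0..T} f" for f :: "real \<Rightarrow> real"
    by (rule integrable_continuous_interval[OF that])
  have "integral {0..T} (\<lambda>t. sqrt ((a t + l0) / (b t + l0)) * (n * b t + n * l0) - (n * b t + n * l0) - n / 2 * (a t - b t))
      = integral {0..T} (\<lambda>t. sqrt ((a t + l0) / (b t + l0)) * (n * b t + n * l0)) - integral {0..T} (\<lambda>t. n * b t + n * l0)
        - n / 2 * (integral {0..T} a - integral {0..T} b)"
    apply (subst integral_diff)
      apply (rule I, intro continuous_intros ca' cb' continuous_on_divide nz)
     apply (rule I, intro continuous_intros ca' cb')
    apply (subst integral_diff)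
      apply (rule I, intro continuous_intros ca' cb' continuous_on_divide nz)
     apply (rule I, intro continuous_intros ca' cb')
    apply (subst integral_mult_right)
    apply (subst integral_diff)
      apply (rule I, rule ca')
     apply (rule I, rule cb')
    apply simp
    done
  also have "integral {0..T} (\<lambda>t. sqrt ((a t + l0) / (b t + l0)) * (n * b t + n * l0) - (n * b t + n * l0) - n / 2 * (a t - b t))
      = integral {0..T} (\<lambda>t. - (n / 2) * (sqrt (a t + l0) - sqrt (b t + l0))\<^sup>2)"
  proof (rule integral_cong)
    fix t assume t: "t \<in> {0..T}"
    show "sqrt ((a t + l0) / (b t + l0)) * (n * b t + n * l0) - (n * b t + n * l0) - n / 2 * (a t - b t)
        = - (n / 2) * (sqrt (a t + l0) - sqrt (b t + l0))\<^sup>2"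
      using pointwise[of "a t" "b t" l0 n] na[OF t] nb[OF t] l0 by (simp add: a_def b_def)
  qed
  finally show ?thesis
    unfolding a_def[symmetric] b_def[symmetric] i1 i2 by simp
qed

lemma exp_half_ln:
  fixes A B l0 :: real
  assumes "A \<ge> 0" "B \<ge> 0" "l0 > 0"
  shows "exp ((ln (1 + A / l0) - ln (1 + B / l0)) / 2) = sqrt ((A + l0) / (B + l0))"
proof -
  have p1: "1 + A / l0 > 0" "1 + B / l0 > 0" using assms by (auto intro: add_pos_nonneg)
  have q1: "1 + A / l0 = (A + l0) / l0" "1 + B / l0 = (B + l0) / l0" using assms by (simp_all add: field_simps)
  have q: "(1 + A / l0) / (1 + B / l0) = (A + l0) / (B + l0)" unfolding q1 using assms by simp
  have x: "(A + l0) / (B + l0) > 0" using assms by simp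
  have "ln (1 + A / l0) - ln (1 + B / l0) = ln ((1 + A / l0) / (1 + B / l0))" using p1 by (simp add: ln_div)
  then have "ln (1 + A / l0) - ln (1 + B / l0) = ln ((A + l0) / (B + l0))" unfolding q .
  moreover have "sqrt ((A + l0) / (B + l0)) = exp (ln ((A + l0) / (B + l0)) / 2)"
  proof (rule real_sqrt_unique)
    show "(exp (ln ((A + l0) / (B + l0)) / 2))\<^sup>2 = (A + l0) / (B + l0)"
      using x by (simp add: power2_eq_square exp_add[symmetric])
  qed simp
  ultimately show ?thesis by simp
qed

lemma loglik_eval:
  fixes t :: "nat \<times> nat \<Rightarrow> real"
  assumes tT: "\<And>j i. j < k \<Longrightarrow> i < m j \<Longrightarrow> t (j, i) \<in> {0..T}"
    and z: "\<And>j s. j < k \<Longrightarrow> s \<in> {0..T} \<Longrightarrow> s < tau \<nu> (dp j) \<theta> \<Longrightarrow> lam j (s - tau \<nu> (dp j) \<theta>) = 0"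
  shows "loglik n T \<nu> l0 lam dp k \<theta> (\<lambda>j. if j < k then map (\<lambda>i. t (j, i)) [0..<m j] else [])
     = (\<Sum>j<k. \<Sum>i<m j. ln (1 + lam j (t (j, i) - tau \<nu> (dp j) \<theta>) / l0))
       - real n * (\<Sum>j<k. integral {tau \<nu> (dp j) \<theta>..T} (\<lambda>s. lam j (s - tau \<nu> (dp j) \<theta>)))"
  unfolding loglik_def
proof (intro arg_cong2[where f = "(-)"] refl sum.cong)
  fix j assume j: "j \<in> {..<k}"
  have "sum_list (map (\<lambda>s. if tau \<nu> (dp j) \<theta> \<le> s \<and> s \<le> T then ln (1 + lam j (s - tau \<nu> (dp j) \<theta>) / l0) else 0)
            (map (\<lambda>i. t (j, i)) [0..<m j]))
      = (\<Sum>i\<in>set [0..<m j]. (if tau \<nu> (dp j) \<theta> \<le> t (j, i) \<and> t (j, i) \<le> T then ln (1 + lam j (t (j, i) - tau \<nu> (dp j) \<theta>) / l0) else 0))"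
    by (simp only: map_map o_def interv_sum_list_conv_sum_set_nat)
  also have "\<dots> = (\<Sum>i<m j. ln (1 + lam j (t (j, i) - tau \<nu> (dp j) \<theta>) / l0))"
  proof -
    have "(\<Sum>i\<in>{0..<m j}. (if tau \<nu> (dp j) \<theta> \<le> t (j, i) \<and> t (j, i) \<le> T then ln (1 + lam j (t (j, i) - tau \<nu> (dp j) \<theta>) / l0) else 0))
        = (\<Sum>i\<in>{0..<m j}. ln (1 + lam j (t (j, i) - tau \<nu> (dp j) \<theta>) / l0))"
    proof (rule sum.cong)
      fix i assume i: "i \<in> {0..<m j}"
      have tt: "t (j, i) \<in> {0..T}" using tT j i by auto
      show "(if tau \<nu> (dp j) \<theta> \<le> t (j, i) \<and> t (j, i) \<le> T then ln (1 + lam j (t (j, i) - tau \<nu> (dp j) \<theta>) / l0) else 0)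
          = ln (1 + lam j (t (j, i) - tau \<nu> (dp j) \<theta>) / l0)"
        using z[of j "t (j, i)"] j tt by auto
    qed simp
    then show ?thesis by (simp add: atLeast0LessThan)
  qed
  finally show "sum_list (map (\<lambda>s. if tau \<nu> (dp j) \<theta> \<le> s \<and> s \<le> T then ln (1 + lam j (s - tau \<nu> (dp j) \<theta>) / l0) else 0)
            ((if j < k then map (\<lambda>i. t (j, i)) [0..<m j] else [])))
      = (\<Sum>i<m j. ln (1 + lam j (t (j, i) - tau \<nu> (dp j) \<theta>) / l0))" using j by simp
qed



theorem lemma3:
  fixes \<Theta> :: "(real^2) set" and T \<nu> l0 :: real and k :: nat
    and dp :: "nat \<Rightarrow> real^2"
    and lam lam' lam'' :: "nat \<Rightarrow> real \<Rightarrow> real"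
  assumes Theta: "bounded \<Theta>" "open \<Theta>" "convex \<Theta>"
    and pos: "T > 0" "\<nu> > 0" "l0 > 0"
    and k3: "k \<ge> 3"
    and alpha_pos: "\<forall>j<k. alpha \<nu> (dp j) \<Theta> > 0"
    and beta_lt: "\<forall>j<k. beta \<nu> (dp j) \<Theta> < T"
    and R1: "\<forall>j<k. \<forall>t\<in>{- beta \<nu> (dp j) \<Theta>..0}. lam j t = 0"
            "\<forall>j<k. \<forall>t\<in>{0<..T - alpha \<nu> (dp j) \<Theta>}. lam j t > 0"
    and R2: "\<forall>j<k. \<forall>t\<in>{- beta \<nu> (dp j) \<Theta>..T - alpha \<nu> (dp j) \<Theta>}.
               (lam j has_real_derivative lam' j t)
                  (at t within {- beta \<nu> (dp j) \<Theta>..T - alpha \<nu> (dp j) \<Theta>}) \<and>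
               (lam' j has_real_derivative lam'' j t)
                  (at t within {- beta \<nu> (dp j) \<Theta>..T - alpha \<nu> (dp j) \<Theta>})"
            "\<forall>j<k. continuous_on {- beta \<nu> (dp j) \<Theta>..T - alpha \<nu> (dp j) \<Theta>} (lam'' j)"
    and R3: "(INF \<theta>\<in>\<Theta>. INF e\<in>{e :: real^2. norm e = 1}.
                e \<bullet> (fisherI T \<nu> l0 lam lam' dp k \<theta> *v e)) > 0"
    and R4: "\<exists>a<k. \<exists>b<k. \<exists>c<k. \<not> collinear {dp a, dp b, dp c}"
  shows "\<exists>\<kappa>>0. \<forall>n::nat. n \<ge> 1 \<longrightarrow> (\<forall>\<theta>0\<in>\<Theta>. \<forall>u::real^2.
           \<theta>0 + (1 / sqrt (real n)) *\<^sub>R u \<in> \<Theta> \<longrightarrow>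
           pp_expect k T (\<lambda>j t. real n * lam j (t - tau \<nu> (dp j) \<theta>0) + real n * l0)
             (\<lambda>X. ennreal (exp ((loglik n T \<nu> l0 lam dp k (\<theta>0 + (1 / sqrt (real n)) *\<^sub>R u) X
                                  - loglik n T \<nu> l0 lam dp k \<theta>0 X) / 2)))
           \<le> ennreal (exp (- \<kappa> * (norm u)\<^sup>2)))"
proof (cases "\<Theta> = {}")
  case True
  show ?thesis by (rule exI[of _ 1]) (simp add: True)
next
  case False
  then obtain th1 where th1: "th1 \<in> \<Theta>" by blast
  obtain B where B: "B > 0" "\<And>x. x \<in> \<Theta> \<Longrightarrow> norm x \<le> B"
    using Theta(1) unfolding bounded_pos by metis
  define al where "al = (\<lambda>j. alpha \<nu> (dp j) \<Theta>)"
  define be where "be = (\<lambda>j. beta \<nu> (dp j) \<Theta>)"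
  have tau_nn: "0 \<le> tau \<nu> d x" for d x using pos(2) by (simp add: tau_def)
  have tau_le: "tau \<nu> (dp j) x \<le> (norm (dp j) + B) / \<nu>" if "x \<in> \<Theta>" for j x
  proof -
    have "dist (dp j) x \<le> norm (dp j) + norm x" by (simp add: dist_norm norm_triangle_ineq4)
    also have "\<dots> \<le> norm (dp j) + B" using B(2)[OF that] by simp
    finally show ?thesis unfolding tau_def using pos(2) by (simp add: divide_right_mono)
  qed
  have tau_in: "tau \<nu> (dp j) x \<in> {al j..be j}" if "x \<in> \<Theta>" for j x
  proof -
    have "bdd_below ((\<lambda>x. tau \<nu> (dp j) x) ` \<Theta>)" by (rule bdd_belowI2[of _ 0]) (rule tau_nn)
    then have 1: "al j \<le> tau \<nu> (dp j) x" unfolding al_def alpha_def by (rule cINF_lower[OF _ that])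
    have "bdd_above ((\<lambda>x. tau \<nu> (dp j) x) ` \<Theta>)" by (rule bdd_aboveI2) (rule tau_le)
    then have 2: "tau \<nu> (dp j) x \<le> be j" unfolding be_def beta_def by (rule cSUP_upper[OF that])
    from 1 2 show ?thesis by simp
  qed
  have abj: "0 < al j" "al j \<le> be j" "be j < T" if "j < k" for j
  proof -
    show "0 < al j" using alpha_pos that by (simp add: al_def)
    show "be j < T" using beta_lt that by (simp add: be_def)
    show "al j \<le> be j" using tau_in[OF th1, of j] by simp
  qed
  obtain a b c where abc: "a < k" "b < k" "c < k" "\<not> collinear {dp a, dp b, dp c}" using R4 by blast
  have dabc: "a \<noteq> b" "a \<noteq> c" "b \<noteq> c" using abc(4) by (auto simp: insert_commute)
  have R1a: "\<forall>t\<in>{- be j..0}. lam j t = 0" if "j < k" for j using R1(1) that by (simp add: be_def)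
  have R1b: "\<forall>t\<in>{0<..T - al j}. lam j t > 0" if "j < k" for j using R1(2) that by (simp add: al_def)
  have R2a: "\<forall>t\<in>{- be j..T - al j}. (lam j has_real_derivative lam' j t) (at t within {- be j..T - al j}) \<and>
               (lam' j has_real_derivative lam'' j t) (at t within {- be j..T - al j})" if "j < k" for j
    using R2(1) that by (simp add: al_def be_def)
  have SS: "\<exists>c>0. \<forall>\<tau> \<tau>'. \<tau> \<in> {al j..be j} \<longrightarrow> \<tau>' \<in> {al j..be j} \<longrightarrow>
      c * (\<tau> - \<tau>')\<^sup>2 \<le> integral {0..T} (\<lambda>t. (sqrt (lam j (t - \<tau>) + l0) - sqrt (lam j (t - \<tau>') + l0))\<^sup>2)"
    if "j < k" for j
    by (rule sqrt_shift[OF abj[OF that] pos(3) R1a[OF that] R1b[OF that] R2a[OF that]])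
  obtain ca where ca: "ca > 0" "\<And>\<tau> \<tau>'. \<tau> \<in> {al a..be a} \<Longrightarrow> \<tau>' \<in> {al a..be a} \<Longrightarrow>
      ca * (\<tau> - \<tau>')\<^sup>2 \<le> integral {0..T} (\<lambda>t. (sqrt (lam a (t - \<tau>) + l0) - sqrt (lam a (t - \<tau>') + l0))\<^sup>2)"
    using SS[OF abc(1)] by blast
  obtain cb where cb: "cb > 0" "\<And>\<tau> \<tau>'. \<tau> \<in> {al b..be b} \<Longrightarrow> \<tau>' \<in> {al b..be b} \<Longrightarrow>
      cb * (\<tau> - \<tau>')\<^sup>2 \<le> integral {0..T} (\<lambda>t. (sqrt (lam b (t - \<tau>) + l0) - sqrt (lam b (t - \<tau>') + l0))\<^sup>2)"
    using SS[OF abc(2)] by blast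
  obtain cc where cc: "cc > 0" "\<And>\<tau> \<tau>'. \<tau> \<in> {al c..be c} \<Longrightarrow> \<tau>' \<in> {al c..be c} \<Longrightarrow>
      cc * (\<tau> - \<tau>')\<^sup>2 \<le> integral {0..T} (\<lambda>t. (sqrt (lam c (t - \<tau>) + l0) - sqrt (lam c (t - \<tau>') + l0))\<^sup>2)"
    using SS[OF abc(3)] by blast
  define RR where "RR = B + norm (dp a) + norm (dp b) + norm (dp c)"
  have RR: "RR > 0" using B(1) unfolding RR_def by (simp add: add_pos_nonneg)
  have distR: "dist d x \<le> RR" if "d \<in> {dp a, dp b, dp c}" "x \<in> \<Theta>" for d x
  proof -
    have "dist d x \<le> norm d + norm x" by (simp add: dist_norm norm_triangle_ineq4)
    moreover have "norm d \<le> norm (dp a) + norm (dp b) + norm (dp c)" using that(1) by auto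
    ultimately show ?thesis using B(2)[OF that(2)] unfolding RR_def by linarith
  qed
  obtain G where G: "G > 0" "\<And>th th0. (\<forall>d\<in>{dp a, dp b, dp c}. dist d th \<le> RR \<and> dist d th0 \<le> RR) \<Longrightarrow>
      G * (norm (th - th0))\<^sup>2 \<le> (tau \<nu> (dp a) th - tau \<nu> (dp a) th0)\<^sup>2 + (tau \<nu> (dp b) th - tau \<nu> (dp b) th0)\<^sup>2
        + (tau \<nu> (dp c) th - tau \<nu> (dp c) th0)\<^sup>2"
    using geo3[OF abc(4) RR pos(2)] by blast
  define cm where "cm = min ca (min cb cc)"
  have cm: "cm > 0" "cm \<le> ca" "cm \<le> cb" "cm \<le> cc" using ca(1) cb(1) cc(1) by (auto simp: cm_def)
  define \<kappa> where "\<kappa> = cm * G / 2"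
  have \<kappa>: "\<kappa> > 0" using cm G by (simp add: \<kappa>_def)
  have lcont: "continuous_on {- be j..T - al j} (lam j)" if "j < k" for j
    by (rule DERIV_continuous_on) (use R2a[OF that] in blast)
  have lnn: "0 \<le> lam j s" if "j < k" "s \<in> {- be j..T - al j}" for j s
  proof (cases "s \<le> 0")
    case True then show ?thesis using R1a[OF that(1)] that(2) by auto
  next
    case False
    then have "lam j s > 0" using R1b[OF that(1)] that(2) by auto
    then show ?thesis by simp
  qed
  have rng: "t - x \<in> {- be j..T - al j}" if "t \<in> {0..T}" "x \<in> {al j..be j}" for t x j
    using that by auto
  have lc: "continuous_on {0..T} (\<lambda>t. lam j (t - x))" if "j < k" "x \<in> {al j..be j}" for j x
    by (rule continuous_on_compose2[OF lcont[OF that(1)]]) (use rng[OF _ that(2)] that(2) in \<open>auto intro!: continuous_intros\<close>)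
  have ln0: "0 \<le> lam j (t - x)" if "j < k" "x \<in> {al j..be j}" "t \<in> {0..T}" for j x t
    using lnn[OF that(1) rng[OF that(3) that(2)]] .
  have zero: "lam j (t - x) = 0" if "j < k" "x \<in> {al j..be j}" "t \<in> {0..x}" for j x t
    using R1a[OF that(1)] that(2,3) by auto
  show ?thesis
  proof (intro exI[of _ \<kappa>] conjI allI impI ballI \<kappa>)
    fix n :: nat and \<theta>0 u
    assume n: "1 \<le> n" and th0: "\<theta>0 \<in> \<Theta>" and thin: "\<theta>0 + (1 / sqrt (real n)) *\<^sub>R u \<in> \<Theta>"
    define th where "th = \<theta>0 + (1 / sqrt (real n)) *\<^sub>R u"
    have th: "th \<in> \<Theta>" using thin by (simp add: th_def)
    define \<tau> where "\<tau> = (\<lambda>j. tau \<nu> (dp j) th)"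
    define \<sigma> where "\<sigma> = (\<lambda>j. tau \<nu> (dp j) \<theta>0)"
    have tin: "\<tau> j \<in> {al j..be j}" "\<sigma> j \<in> {al j..be j}" for j
      using tau_in[OF th] tau_in[OF th0] by (simp_all add: \<tau>_def \<sigma>_def)
    have tT: "0 \<le> \<tau> j" "\<tau> j \<le> T" "0 \<le> \<sigma> j" "\<sigma> j \<le> T" if "j < k" for j
      using tin[of j] abj[OF that] by auto
    define mu where "mu = (\<lambda>j t. real n * lam j (t - \<sigma> j) + real n * l0)"
    define phi where "phi = (\<lambda>j t. sqrt ((lam j (t - \<tau> j) + l0) / (lam j (t - \<sigma> j) + l0)))"
    define Ith where "Ith = (\<Sum>j<k. integral {\<tau> j..T} (\<lambda>s. lam j (s - \<tau> j)))"
    define Ith0 where "Ith0 = (\<Sum>j<k. integral {\<sigma> j..T} (\<lambda>s. lam j (s - \<sigma> j)))"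
    define E0 where "E0 = exp (- (real n * (Ith - Ith0)) / 2)"
    define F where "F = (\<lambda>X. ennreal (exp ((loglik n T \<nu> l0 lam dp k th X - loglik n T \<nu> l0 lam dp k \<theta>0 X) / 2)))"
    have PP: "pp_expect k T mu F = ennreal (E0 * (\<Prod>j<k. exp (integral {0..T} (\<lambda>t. phi j t * mu j t) - integral {0..T} (mu j))))"
    proof (rule LF)
      fix j assume j: "j < k"
      show "continuous_on {0..T} (mu j)" unfolding mu_def using lc[OF j tin(2)] by (intro continuous_intros)
      have nz: "\<forall>t\<in>{0..T}. lam j (t - \<sigma> j) + l0 \<noteq> 0"
      proof
        fix t assume "t \<in> {0..T}"
        then have "0 \<le> lam j (t - \<sigma> j)" by (rule ln0[OF j tin(2)])
        then show "lam j (t - \<sigma> j) + l0 \<noteq> 0" using pos(3) by linarith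
      qed
      show "continuous_on {0..T} (phi j)" unfolding phi_def
        by (intro continuous_intros continuous_on_divide[OF _ _ nz] lc[OF j tin(1)] lc[OF j tin(2)])
    next
      fix j t assume j: "j < k" and t: "t \<in> {0..T}"
      show "0 \<le> mu j t" unfolding mu_def using ln0[OF j tin(2) t] pos(3) by simp
      show "0 \<le> phi j t" unfolding phi_def using ln0[OF j tin(1) t] ln0[OF j tin(2) t] pos(3) by simp
    next
      show "0 \<le> E0" by (simp add: E0_def)
    next
      fix m :: "nat \<Rightarrow> nat" and t :: "nat \<times> nat \<Rightarrow> real"
      assume tt: "\<And>j i. j < k \<Longrightarrow> i < m j \<Longrightarrow> t (j, i) \<in> {0..T}"
      define X where "X = (\<lambda>j. if j < k then map (\<lambda>i. t (j, i)) [0..<m j] else [])"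
      define D where "D = (\<lambda>j i. (ln (1 + lam j (t (j, i) - \<tau> j) / l0) - ln (1 + lam j (t (j, i) - \<sigma> j) / l0)) / 2)"
      have L1: "loglik n T \<nu> l0 lam dp k th X = (\<Sum>j<k. \<Sum>i<m j. ln (1 + lam j (t (j, i) - \<tau> j) / l0)) - real n * Ith"
      proof -
        have "loglik n T \<nu> l0 lam dp k th X = (\<Sum>j<k. \<Sum>i<m j. ln (1 + lam j (t (j, i) - tau \<nu> (dp j) th) / l0))
            - real n * (\<Sum>j<k. integral {tau \<nu> (dp j) th..T} (\<lambda>s. lam j (s - tau \<nu> (dp j) th)))"
          unfolding X_def
        proof (rule loglik_eval[where k=k and m=m and t=t and T=T, OF tt])
          fix j s assume j: "j < k" and s: "s \<in> {0..T}" "s < tau \<nu> (dp j) th"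
          show "lam j (s - tau \<nu> (dp j) th) = 0" using zero[OF j tin(1)[of j], of s] s by (simp add: \<tau>_def)
        qed
        then show ?thesis by (simp only: \<tau>_def Ith_def)
      qed
      have L0: "loglik n T \<nu> l0 lam dp k \<theta>0 X = (\<Sum>j<k. \<Sum>i<m j. ln (1 + lam j (t (j, i) - \<sigma> j) / l0)) - real n * Ith0"
      proof -
        have "loglik n T \<nu> l0 lam dp k \<theta>0 X = (\<Sum>j<k. \<Sum>i<m j. ln (1 + lam j (t (j, i) - tau \<nu> (dp j) \<theta>0) / l0))
            - real n * (\<Sum>j<k. integral {tau \<nu> (dp j) \<theta>0..T} (\<lambda>s. lam j (s - tau \<nu> (dp j) \<theta>0)))"
          unfolding X_def
        proof (rule loglik_eval[where k=k and m=m and t=t and T=T, OF tt])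
          fix j s assume j: "j < k" and s: "s \<in> {0..T}" "s < tau \<nu> (dp j) \<theta>0"
          show "lam j (s - tau \<nu> (dp j) \<theta>0) = 0" using zero[OF j tin(2)[of j], of s] s by (simp add: \<sigma>_def)
        qed
        then show ?thesis by (simp only: \<sigma>_def Ith0_def)
      qed
      have Dsum: "(\<Sum>j<k. \<Sum>i<m j. D j i) = ((\<Sum>j<k. \<Sum>i<m j. ln (1 + lam j (t (j, i) - \<tau> j) / l0))
          - (\<Sum>j<k. \<Sum>i<m j. ln (1 + lam j (t (j, i) - \<sigma> j) / l0))) / 2"
        unfolding D_def by (simp add: sum_subtractf sum_divide_distrib[symmetric])
      have ex: "(loglik n T \<nu> l0 lam dp k th X - loglik n T \<nu> l0 lam dp k \<theta>0 X) / 2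
          = (\<Sum>j<k. \<Sum>i<m j. D j i) + (- (real n * (Ith - Ith0)) / 2)"
        unfolding L1 L0 Dsum by (simp add: field_simps)
      have eD: "exp (D j i) = phi j (t (j, i))" if "j \<in> {..<k}" "i \<in> {..<m j}" for j i
      proof -
        have j: "j < k" using that by simp
        have tji: "t (j, i) \<in> {0..T}" using tt[of j i] that by simp
        show ?thesis unfolding D_def phi_def
          by (rule exp_half_ln[OF ln0[OF j tin(1) tji] ln0[OF j tin(2) tji] pos(3)])
      qed
      have "exp ((loglik n T \<nu> l0 lam dp k th X - loglik n T \<nu> l0 lam dp k \<theta>0 X) / 2)
          = E0 * (\<Prod>j<k. \<Prod>i<m j. exp (D j i))"
        unfolding ex exp_add by (simp add: exp_sum E0_def mult.commute)
      also have "(\<Prod>j<k. \<Prod>i<m j. exp (D j i)) = (\<Prod>j<k. \<Prod>i<m j. phi j (t (j, i)))"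
        by (intro prod.cong refl eD)
      finally show "F (\<lambda>j. if j < k then map (\<lambda>i. t (j, i)) [0..<m j] else []) = ennreal (E0 * (\<Prod>j<k. \<Prod>i<m j. phi j (t (j, i))))"
        unfolding F_def X_def by simp
    qed
    show "pp_expect k T (\<lambda>j t. real n * lam j (t - tau \<nu> (dp j) \<theta>0) + real n * l0)
             (\<lambda>X. ennreal (exp ((loglik n T \<nu> l0 lam dp k (\<theta>0 + (1 / sqrt (real n)) *\<^sub>R u) X
                                  - loglik n T \<nu> l0 lam dp k \<theta>0 X) / 2)))
           \<le> ennreal (exp (- \<kappa> * (norm u)\<^sup>2))"
    proof -
      have eqmu: "(\<lambda>j t. real n * lam j (t - tau \<nu> (dp j) \<theta>0) + real n * l0) = mu" unfolding mu_def \<sigma>_def ..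
      have eqF: "(\<lambda>X. ennreal (exp ((loglik n T \<nu> l0 lam dp k (\<theta>0 + (1 / sqrt (real n)) *\<^sub>R u) X
                                  - loglik n T \<nu> l0 lam dp k \<theta>0 X) / 2))) = F" unfolding F_def th_def ..
      define H where "H = (\<lambda>j. integral {0..T} (\<lambda>t. (sqrt (lam j (t - \<tau> j) + l0) - sqrt (lam j (t - \<sigma> j) + l0))\<^sup>2))"
      have perj: "integral {0..T} (\<lambda>t. phi j t * mu j t) - integral {0..T} (mu j)
          - real n * (integral {\<tau> j..T} (\<lambda>s. lam j (s - \<tau> j)) - integral {\<sigma> j..T} (\<lambda>s. lam j (s - \<sigma> j))) / 2
          = - (real n / 2) * H j" if j: "j < k" for j
        unfolding phi_def mu_def H_def
        by (rule per_j[OF lc[OF j tin(1)] lc[OF j tin(2)] ln0[OF j tin(1)] ln0[OF j tin(2)] pos(3) tT[OF j] zero[OF j tin(1)] zero[OF j tin(2)]])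
      define AL where "AL = (\<lambda>j. integral {0..T} (\<lambda>t. phi j t * mu j t) - integral {0..T} (mu j))"
      define II where "II = (\<lambda>j. integral {\<tau> j..T} (\<lambda>s. lam j (s - \<tau> j)) - integral {\<sigma> j..T} (\<lambda>s. lam j (s - \<sigma> j)))"
      have IthI: "Ith - Ith0 = (\<Sum>j<k. II j)" unfolding Ith_def Ith0_def II_def by (simp add: sum_subtractf)
      have val: "E0 * (\<Prod>j<k. exp (AL j)) = exp (- (real n / 2) * (\<Sum>j<k. H j))"
      proof -
        have "E0 * (\<Prod>j<k. exp (AL j)) = exp (- (real n * (Ith - Ith0)) / 2 + (\<Sum>j<k. AL j))"
          unfolding exp_add E0_def exp_sum[OF finite_lessThan] ..
        also have "- (real n * (Ith - Ith0)) / 2 + (\<Sum>j<k. AL j) = (\<Sum>j<k. AL j - real n * II j / 2)"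
          unfolding IthI by (simp add: sum_subtractf sum_distrib_left sum_divide_distrib)
        also have "\<dots> = (\<Sum>j<k. - (real n / 2) * H j)"
          by (rule sum.cong[OF refl]) (use perj in \<open>simp add: AL_def II_def\<close>)
        also have "\<dots> = - (real n / 2) * (\<Sum>j<k. H j)" by (simp add: sum_distrib_left)
        finally show ?thesis .
      qed
      have Hnn: "0 \<le> H j" for j
      proof (cases "(\<lambda>t. (sqrt (lam j (t - \<tau> j) + l0) - sqrt (lam j (t - \<sigma> j) + l0))\<^sup>2) integrable_on {0..T}")
        case True then show ?thesis unfolding H_def by (rule integral_nonneg) simp
      next
        case False then show ?thesis unfolding H_def by (simp add: not_integrable_integral)
      qed
      have sum3: "H a + H b + H c \<le> (\<Sum>j<k. H j)"
      proof -
        have "(\<Sum>j\<in>{a, b, c}. H j) \<le> (\<Sum>j<k. H j)" by (rule sum_mono2) (use abc Hnn in auto)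
        moreover have "(\<Sum>j\<in>{a, b, c}. H j) = H a + H b + H c" using dabc by simp
        ultimately show ?thesis by simp
      qed
      have Ha: "ca * (\<tau> a - \<sigma> a)\<^sup>2 \<le> H a" unfolding H_def by (rule ca(2)[OF tin(1) tin(2)])
      have Hb: "cb * (\<tau> b - \<sigma> b)\<^sup>2 \<le> H b" unfolding H_def by (rule cb(2)[OF tin(1) tin(2)])
      have Hc: "cc * (\<tau> c - \<sigma> c)\<^sup>2 \<le> H c" unfolding H_def by (rule cc(2)[OF tin(1) tin(2)])
      have geo: "G * (norm (th - \<theta>0))\<^sup>2 \<le> (\<tau> a - \<sigma> a)\<^sup>2 + (\<tau> b - \<sigma> b)\<^sup>2 + (\<tau> c - \<sigma> c)\<^sup>2"
        unfolding \<tau>_def \<sigma>_def by (rule G(2)) (use distR th th0 in auto)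
      have nrm: "(norm (th - \<theta>0))\<^sup>2 = (norm u)\<^sup>2 / real n"
      proof -
        have "norm (th - \<theta>0) = norm u / sqrt (real n)" unfolding th_def using n by simp
        then show ?thesis using n by (simp add: power_divide)
      qed
      have "cm * (G * (norm (th - \<theta>0))\<^sup>2) \<le> cm * ((\<tau> a - \<sigma> a)\<^sup>2 + (\<tau> b - \<sigma> b)\<^sup>2 + (\<tau> c - \<sigma> c)\<^sup>2)"
        by (rule mult_left_mono[OF geo]) (use cm in simp)
      also have "\<dots> \<le> H a + H b + H c"
      proof -
        have "cm * (\<tau> a - \<sigma> a)\<^sup>2 \<le> ca * (\<tau> a - \<sigma> a)\<^sup>2" by (rule mult_right_mono) (use cm in auto)
        moreover have "cm * (\<tau> b - \<sigma> b)\<^sup>2 \<le> cb * (\<tau> b - \<sigma> b)\<^sup>2" by (rule mult_right_mono) (use cm in auto)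
        moreover have "cm * (\<tau> c - \<sigma> c)\<^sup>2 \<le> cc * (\<tau> c - \<sigma> c)\<^sup>2" by (rule mult_right_mono) (use cm in auto)
        ultimately show ?thesis using Ha Hb Hc by (simp add: algebra_simps)
      qed
      also have "\<dots> \<le> (\<Sum>j<k. H j)" by (rule sum3)
      finally have key: "cm * (G * ((norm u)\<^sup>2 / real n)) \<le> (\<Sum>j<k. H j)" unfolding nrm .
      have npos: "real n > 0" using n by simp
      have "\<kappa> * (norm u)\<^sup>2 = (real n / 2) * (cm * (G * ((norm u)\<^sup>2 / real n)))"
        using npos by (simp add: \<kappa>_def field_simps)
      also have "\<dots> \<le> (real n / 2) * (\<Sum>j<k. H j)" by (rule mult_left_mono[OF key]) simp
      finally have fin: "- (real n / 2) * (\<Sum>j<k. H j) \<le> - \<kappa> * (norm u)\<^sup>2" by simp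
      have "pp_expect k T mu F = ennreal (exp (- (real n / 2) * (\<Sum>j<k. H j)))"
        unfolding PP val[symmetric] AL_def ..
      also have "\<dots> \<le> ennreal (exp (- \<kappa> * (norm u)\<^sup>2))"
        by (rule ennreal_leI) (use fin in simp)
      finally show ?thesis unfolding eqmu eqF .
    qed
  qed
qed

end
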